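(* Let $(T_1\to B_1)$ and $(T_2\to B_2)$ be bars. Then the tensor product $(T_1\to B_1)\otimes(T_2\to B_2)$, as a graded filtered chain complex over $\mathbb{F}_2$, is isomorphic to a direct sum of two bars $(X_1\to Y_1)\oplus(X_2\to Y_2)$, where the grading and filtration level of $Y_1$ are the sums of those of $B_1$ and $B_2$, and the grading and filtration level of $X_2$ are the sums of those of $T_1$ and $T_2$. In particular, one of the two summands is an even bar and the other is an odd bar.
   Context: All complexes are finite-dimensional, graded, filtered chain complexes over $\mathbb{F}_2$ whose differential lowers grading by one and does not increase filtration level. A bar $(T\to B)$ is a two-dimensional such complex with basis elements $T$ and $B$ (each homogeneous of a given grading and filtration level), differential $\partial T = B$ (so it is acyclic), with the filtration level of $B$ strictly less than that of $T$. A bar is even or odd according as the grading of $B$ is even or odd. Tensor products carry the grading and filtration given by summing those of the factors and the differential $\partial(x\otimes y)=\partial x\otimes y + x\otimes\partial y$. *)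

theory Defs
  imports Main
begin

text \<open>A finite-dimensional graded filtered chain complex over F2, presented by a
finite homogeneous basis adapted to the filtration: each basis element has a
grading and a filtration level; a vector is a finite set of basis elements
(F2-linear combination); the filtration level F_p is spanned by the basis
elements of level at most p.  The differential is given on basis elements.\<close>

record 'b fcx =
  basis :: "'b set"
  gr    :: "'b \<Rightarrow> int"
  flt   :: "'b \<Rightarrow> int"
  dif   :: "'b \<Rightarrow> 'b set"

definition lin :: "('a \<Rightarrow> 'b set) \<Rightarrow> 'a set \<Rightarrow> 'b set" where
  "lin f V = {y. odd (card {x \<in> V. y \<in> f x})}"

definition symdiff :: "'a set \<Rightarrow> 'a set \<Rightarrow> 'a set" where
  "symdiff A B = (A - B) \<union> (B - A)"

definition is_cx :: "'b fcx \<Rightarrow> bool" where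
  "is_cx C \<longleftrightarrow> finite (basis C) \<and>
     (\<forall>b \<in> basis C. dif C b \<subseteq> basis C \<and>
        (\<forall>c \<in> dif C b. gr C c = gr C b - 1 \<and> flt C c \<le> flt C b) \<and>
        lin (dif C) (dif C b) = {})"

definition tensor :: "'a fcx \<Rightarrow> 'b fcx \<Rightarrow> ('a \<times> 'b) fcx" where
  "tensor C D = \<lparr> basis = basis C \<times> basis D,
     gr = (\<lambda>(a, b). gr C a + gr D b),
     flt = (\<lambda>(a, b). flt C a + flt D b),
     dif = (\<lambda>(a, b). symdiff ((\<lambda>c. (c, b)) ` dif C a) ((\<lambda>c. (a, c)) ` dif D b)) \<rparr>"

definition dsum :: "'a fcx \<Rightarrow> 'b fcx \<Rightarrow> ('a + 'b) fcx" where
  "dsum C D = \<lparr> basis = Inl ` basis C \<union> Inr ` basis D,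
     gr = case_sum (gr C) (gr D),
     flt = case_sum (flt C) (flt D),
     dif = case_sum (\<lambda>a. Inl ` dif C a) (\<lambda>b. Inr ` dif D b) \<rparr>"

definition piece :: "'b fcx \<Rightarrow> int \<Rightarrow> int \<Rightarrow> 'b set set" where
  "piece C n p = {V. V \<subseteq> basis C \<and> (\<forall>x \<in> V. gr C x = n \<and> flt C x \<le> p)}"

definition filt_iso :: "'a fcx \<Rightarrow> 'b fcx \<Rightarrow> ('a \<Rightarrow> 'b set) \<Rightarrow> bool" where
  "filt_iso C D f \<longleftrightarrow>
     (\<forall>x \<in> basis C. f x \<subseteq> basis D) \<and>
     bij_betw (lin f) (Pow (basis C)) (Pow (basis D)) \<and>
     (\<forall>n p. lin f ` piece C n p = piece D n p) \<and>
     (\<forall>x \<in> basis C. lin (dif D) (f x) = lin f (dif C x))"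

definition isomorphic :: "'a fcx \<Rightarrow> 'b fcx \<Rightarrow> bool" where
  "isomorphic C D \<longleftrightarrow> (\<exists>f. filt_iso C D f)"

definition is_bar :: "'b fcx \<Rightarrow> 'b \<Rightarrow> 'b \<Rightarrow> bool" where
  "is_bar C T B \<longleftrightarrow> is_cx C \<and> T \<noteq> B \<and> basis C = {T, B} \<and>
     dif C T = {B} \<and> dif C B = {} \<and> flt C B < flt C T"

definition even_bar :: "'b fcx \<Rightarrow> 'b \<Rightarrow> 'b \<Rightarrow> bool" where
  "even_bar C T B \<longleftrightarrow> is_bar C T B \<and> even (gr C B)"

definition odd_bar :: "'b fcx \<Rightarrow> 'b \<Rightarrow> 'b \<Rightarrow> bool" where
  "odd_bar C T B \<longleftrightarrow> is_bar C T B \<and> odd (gr C B)"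

end

theory Submission
  imports Defs
begin

lemma lin_mem: "y \<in> lin f V \<longleftrightarrow> odd (card {x \<in> V. y \<in> f x})"
  by (simp add: lin_def)

lemma card1: "{x \<in> V. x = a} = (if a \<in> V then {a} else {})" by auto
lemma card2: "a \<noteq> b \<Longrightarrow> {x \<in> V. x = a \<or> x = b} =
   (if a \<in> V then (if b \<in> V then {a,b} else {a}) else (if b \<in> V then {b} else {}))" by auto

lemma odd1: "odd (card {x \<in> V. x = a}) \<longleftrightarrow> a \<in> V"
  by (simp add: card1)
lemma odd2: "a \<noteq> b \<Longrightarrow> odd (card {x \<in> V. x = a \<or> x = b}) \<longleftrightarrow> ((a \<in> V) \<noteq> (b \<in> V))"
  by (simp add: card2)

lemma lin_single: "lin f {x} = f x"
proof -
  have "{x' \<in> {x}. y \<in> f x'} = (if y \<in> f x then {x} else {})" for y by auto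
  then show ?thesis unfolding lin_def by auto
qed

lemma lin_empty: "lin f {} = {}" unfolding lin_def by simp

lemma lin_two: assumes "a \<noteq> b" shows "lin f {a,b} = symdiff (f a) (f b)"
proof -
  have "{x \<in> {a,b}. y \<in> f x} = (if y \<in> f a then {a} else {}) \<union> (if y \<in> f b then {b} else {})" for y
    by auto
  then show ?thesis unfolding lin_def symdiff_def using assms by auto
qed

lemma lin_support: "y \<in> lin f V \<Longrightarrow> \<exists>x\<in>V. y \<in> f x"
proof (rule ccontr)
  assume "y \<in> lin f V" "\<not> (\<exists>x\<in>V. y \<in> f x)"
  then have "{x \<in> V. y \<in> f x} = {}" by auto
  with \<open>y \<in> lin f V\<close> show False unfolding lin_def by simp
qed

lemma lin_sub: "(\<And>x. x \<in> V \<Longrightarrow> f x \<subseteq> S) \<Longrightarrow> lin f V \<subseteq> S"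
  using lin_support by fastforce

lemma iso_crit:
  assumes fD: "\<And>x. x \<in> basis C \<Longrightarrow> f x \<subseteq> basis D"
    and gC: "\<And>y. y \<in> basis D \<Longrightarrow> g y \<subseteq> basis C"
    and gf: "\<And>V. V \<subseteq> basis C \<Longrightarrow> lin g (lin f V) = V"
    and fg: "\<And>W. W \<subseteq> basis D \<Longrightarrow> lin f (lin g W) = W"
    and fpres: "\<And>x y. x \<in> basis C \<Longrightarrow> y \<in> f x \<Longrightarrow> gr D y = gr C x \<and> flt D y \<le> flt C x"
    and gpres: "\<And>x y. y \<in> basis D \<Longrightarrow> x \<in> g y \<Longrightarrow> gr C x = gr D y \<and> flt C x \<le> flt D y"
    and dif: "\<And>x. x \<in> basis C \<Longrightarrow> lin (dif D) (f x) = lin f (dif C x)"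
  shows "filt_iso C D f"
  unfolding filt_iso_def
proof (intro conjI allI)
  show "\<forall>x\<in>basis C. f x \<subseteq> basis D" using fD by blast
  show "\<forall>x\<in>basis C. lin (dif D) (f x) = lin f (dif C x)" using dif by blast
  have fsub: "lin f V \<subseteq> basis D" if "V \<subseteq> basis C" for V
    using that fD by (intro lin_sub) blast
  have gsub: "lin g W \<subseteq> basis C" if "W \<subseteq> basis D" for W
    using that gC by (intro lin_sub) blast
  show "bij_betw (lin f) (Pow (basis C)) (Pow (basis D))"
  proof (rule bij_betw_byWitness[where f'="lin g"])
    show "\<forall>a\<in>Pow (basis C). lin g (lin f a) = a" using gf by blast
    show "\<forall>a\<in>Pow (basis D). lin f (lin g a) = a" using fg by blast
    show "lin f ` Pow (basis C) \<subseteq> Pow (basis D)" using fsub by blast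
    show "lin g ` Pow (basis D) \<subseteq> Pow (basis C)" using gsub by blast
  qed
  fix n p
  show "lin f ` piece C n p = piece D n p"
  proof
    show "lin f ` piece C n p \<subseteq> piece D n p"
    proof
      fix W assume "W \<in> lin f ` piece C n p"
      then obtain V where V: "V \<in> piece C n p" "W = lin f V" by auto
      have "W \<subseteq> basis D" using V fsub unfolding piece_def by auto
      moreover have "\<forall>y\<in>W. gr D y = n \<and> flt D y \<le> p"
      proof
        fix y assume "y \<in> W"
        then obtain x where "x \<in> V" "y \<in> f x" using V lin_support by metis
        then show "gr D y = n \<and> flt D y \<le> p" using V fpres unfolding piece_def by force
      qed
      ultimately show "W \<in> piece D n p" unfolding piece_def by auto
    qed
    show "piece D n p \<subseteq> lin f ` piece C n p"
    proof
      fix W assume W: "W \<in> piece D n p"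
      have "lin g W \<subseteq> basis C" using W gsub unfolding piece_def by auto
      moreover have "\<forall>x\<in>lin g W. gr C x = n \<and> flt C x \<le> p"
      proof
        fix x assume "x \<in> lin g W"
        then obtain y where "y \<in> W" "x \<in> g y" using lin_support by metis
        then show "gr C x = n \<and> flt C x \<le> p" using W gpres unfolding piece_def by force
      qed
      ultimately have "lin g W \<in> piece C n p" unfolding piece_def by auto
      moreover have "lin f (lin g W) = W" using W fg unfolding piece_def by auto
      ultimately show "W \<in> lin f ` piece C n p" by (metis image_eqI)
    qed
  qed
qed

definition mkbar :: "int \<Rightarrow> int \<Rightarrow> int \<Rightarrow> int \<Rightarrow> bool fcx" where
  "mkbar gt gb ft fb = \<lparr> basis = {True, False}, gr = (\<lambda>x. if x then gt else gb),
     flt = (\<lambda>x. if x then ft else fb), dif = (\<lambda>x. if x then {False} else {}) \<rparr>"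

lemma mkbar_bar: "gt = gb + 1 \<Longrightarrow> fb < ft \<Longrightarrow> is_bar (mkbar gt gb ft fb) True False"
  unfolding is_bar_def is_cx_def mkbar_def by (auto simp: lin_single lin_empty)


lemma decomp:
  fixes C :: "'c fcx"
  assumes dist: "tt \<noteq> u" "tt \<noteq> v" "tt \<noteq> bb" "u \<noteq> v" "u \<noteq> bb" "v \<noteq> bb"
    and bas: "basis C = {tt, u, v, bb}"
    and dtt: "dif C tt = {u, v}" and du: "dif C u = {bb}" and dv: "dif C v = {bb}" and dbb: "dif C bb = {}"
    and gu: "gr C u = gr C tt - 1" and gv: "gr C v = gr C tt - 1" and gbb: "gr C bb = gr C tt - 2"
    and fvu: "flt C v \<le> flt C u" and fut: "flt C u < flt C tt" and fbv: "flt C bb < flt C v"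
  shows "\<exists>(D1 :: bool fcx) (D2 :: bool fcx) X1 Y1 X2 Y2.
           is_bar D1 X1 Y1 \<and> is_bar D2 X2 Y2 \<and>
           isomorphic C (dsum D1 D2) \<and>
           gr D1 Y1 = gr C bb \<and> flt D1 Y1 = flt C bb \<and>
           gr D2 X2 = gr C tt \<and> flt D2 X2 = flt C tt \<and>
           ((even_bar D1 X1 Y1 \<and> odd_bar D2 X2 Y2) \<or> (odd_bar D1 X1 Y1 \<and> even_bar D2 X2 Y2))"
proof -
  define D1 where "D1 = mkbar (gr C v) (gr C bb) (flt C v) (flt C bb)"
  define D2 where "D2 = mkbar (gr C tt) (gr C u) (flt C tt) (flt C u)"
  define D where "D = dsum D1 D2"
  define f :: "'c \<Rightarrow> (bool + bool) set" where "f x = {y. (y = Inr True \<and> x = tt) \<or> (y = Inl True \<and> (x = u \<or> x = v))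
      \<or> (y = Inr False \<and> x = u) \<or> (y = Inl False \<and> x = bb)}" for x
  define g :: "bool + bool \<Rightarrow> 'c set" where "g y = {x. (x = tt \<and> y = Inr True) \<or> (x = v \<and> (y = Inl True \<or> y = Inr False))
      \<or> (x = u \<and> y = Inr False) \<or> (x = bb \<and> y = Inl False)}" for y
  have b1: "is_bar D1 True False" unfolding D1_def using gv gbb fbv by (intro mkbar_bar) auto
  have b2: "is_bar D2 True False" unfolding D2_def using gu fut by (intro mkbar_bar) auto
  have basD: "basis D = UNIV"
  proof -
    have "y \<in> basis D" for y unfolding D_def dsum_def D1_def D2_def mkbar_def
      by (cases y) auto
    then show ?thesis by auto
  qed
  have ftt: "f tt = {Inr True}" unfolding f_def using dist by auto
  have fu: "f u = {Inr False, Inl True}" unfolding f_def using dist by auto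
  have fv: "f v = {Inl True}" unfolding f_def using dist by auto
  have fbb: "f bb = {Inl False}" unfolding f_def using dist by auto
  have mf1: "Inr True \<in> lin f V \<longleftrightarrow> tt \<in> V" for V
  proof -
    have "{x \<in> V. Inr True \<in> f x} = {x \<in> V. x = tt}" unfolding f_def by auto
    then show ?thesis by (simp only: lin_mem odd1)
  qed
  have mf2: "Inl True \<in> lin f V \<longleftrightarrow> ((u \<in> V) \<noteq> (v \<in> V))" for V
  proof -
    have "{x \<in> V. Inl True \<in> f x} = {x \<in> V. x = u \<or> x = v}" unfolding f_def by auto
    then show ?thesis using odd2[OF dist(4), of V] by (simp only: lin_mem)
  qed
  have mf3: "Inr False \<in> lin f V \<longleftrightarrow> u \<in> V" for V
  proof -
    have "{x \<in> V. Inr False \<in> f x} = {x \<in> V. x = u}" unfolding f_def by auto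
    then show ?thesis by (simp only: lin_mem odd1)
  qed
  have mf4: "Inl False \<in> lin f V \<longleftrightarrow> bb \<in> V" for V
  proof -
    have "{x \<in> V. Inl False \<in> f x} = {x \<in> V. x = bb}" unfolding f_def by auto
    then show ?thesis by (simp only: lin_mem odd1)
  qed
  have mg1: "tt \<in> lin g W \<longleftrightarrow> Inr True \<in> W" for W
  proof -
    have "{y \<in> W. tt \<in> g y} = {y \<in> W. y = Inr True}" unfolding g_def using dist by auto
    then show ?thesis by (simp only: lin_mem odd1)
  qed
  have mg2: "v \<in> lin g W \<longleftrightarrow> ((Inl True \<in> W) \<noteq> (Inr False \<in> W))" for W
  proof -
    have "{y \<in> W. v \<in> g y} = {y \<in> W. y = Inl True \<or> y = Inr False}" unfolding g_def using dist by auto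
    then show ?thesis using odd2[of "Inl True" "Inr False" W] by (simp only: lin_mem simp_thms sum.distinct)
  qed
  have mg3: "u \<in> lin g W \<longleftrightarrow> Inr False \<in> W" for W
  proof -
    have "{y \<in> W. u \<in> g y} = {y \<in> W. y = Inr False}" unfolding g_def using dist by auto
    then show ?thesis by (simp only: lin_mem odd1)
  qed
  have mg4: "bb \<in> lin g W \<longleftrightarrow> Inl False \<in> W" for W
  proof -
    have "{y \<in> W. bb \<in> g y} = {y \<in> W. y = Inl False}" unfolding g_def using dist by auto
    then show ?thesis by (simp only: lin_mem odd1)
  qed
  have mg5: "x \<notin> {tt, u, v, bb} \<Longrightarrow> x \<notin> lin g W" for x W
  proof -
    assume "x \<notin> {tt, u, v, bb}"
    then have "{y \<in> W. x \<in> g y} = {}" unfolding g_def by auto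
    then show ?thesis by (simp only: lin_mem card.empty) simp
  qed
  have iso: "filt_iso C D f"
  proof (rule iso_crit[where g = g])
    show "f x \<subseteq> basis D" for x using basD by auto
    show "y \<in> basis D \<Longrightarrow> g y \<subseteq> basis C" for y unfolding bas g_def by auto
    show "lin g (lin f V) = V" if "V \<subseteq> basis C" for V
    proof (rule set_eqI)
      fix x
      show "x \<in> lin g (lin f V) \<longleftrightarrow> x \<in> V"
      proof (cases "x \<in> {tt, u, v, bb}")
        case True
        then show ?thesis by (auto simp: mg1 mg2 mg3 mg4 mf1 mf2 mf3 mf4)
      next
        case False
        then show ?thesis using mg5 that bas by blast
      qed
    qed
    show "lin f (lin g W) = W" if "W \<subseteq> basis D" for W
    proof (rule set_eqI)
      fix y :: "bool + bool"
      show "y \<in> lin f (lin g W) \<longleftrightarrow> y \<in> W"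
      proof (cases y)
        case (Inl a)
        then show ?thesis by (cases a) (auto simp: mg1 mg2 mg3 mg4 mf1 mf2 mf3 mf4)
      next
        case (Inr a)
        then show ?thesis by (cases a) (auto simp: mg1 mg2 mg3 mg4 mf1 mf2 mf3 mf4)
      qed
    qed
    show "gr D y = gr C x \<and> flt D y \<le> flt C x" if "x \<in> basis C" "y \<in> f x" for x y
      using that fvu gu gv unfolding bas D_def dsum_def D1_def D2_def mkbar_def f_def by auto
    show "gr C x = gr D y \<and> flt C x \<le> flt D y" if "y \<in> basis D" "x \<in> g y" for x y
      using that fvu gu gv unfolding bas D_def dsum_def D1_def D2_def mkbar_def g_def by auto
    show "lin (dif D) (f x) = lin f (dif C x)" if "x \<in> basis C" for x
    proof -
      have dD: "dif D (Inr True) = {Inr False}" "dif D (Inr False) = {}"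
        "dif D (Inl True) = {Inl False}" "dif D (Inl False) = {}"
        unfolding D_def dsum_def D1_def D2_def mkbar_def by auto
      have "x = tt \<or> x = u \<or> x = v \<or> x = bb" using that bas by auto
      then show ?thesis
        using dist by (auto simp: ftt fu fv fbb dtt du dv dbb dD lin_single lin_two lin_empty symdiff_def)
    qed
  qed
  have gr1: "gr D1 False = gr C bb" "flt D1 False = flt C bb"
    "gr D2 True = gr C tt" "flt D2 True = flt C tt" "gr D2 False = gr C u"
    unfolding D1_def D2_def mkbar_def by auto
  have par: "(even_bar D1 True False \<and> odd_bar D2 True False) \<or> (odd_bar D1 True False \<and> even_bar D2 True False)"
    unfolding even_bar_def odd_bar_def using b1 b2 gr1 gu gbb by presburger
  show ?thesis
    apply (rule exI[of _ D1], rule exI[of _ D2], rule exI[of _ True], rule exI[of _ False],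
      rule exI[of _ True], rule exI[of _ False])
    using b1 b2 iso gr1 par unfolding isomorphic_def D_def by blast
qed


lemma bar_facts:
  assumes "is_bar C T B"
  shows "T \<noteq> B" "basis C = {T, B}" "dif C T = {B}" "dif C B = {}" "flt C B < flt C T"
    "gr C B = gr C T - 1"
  using assms unfolding is_bar_def is_cx_def by auto

theorem mainTheorem4:
  fixes C1 :: "'a fcx" and C2 :: "'b fcx"
  assumes "is_bar C1 T1 B1" and "is_bar C2 T2 B2"
  shows "\<exists>(D1 :: bool fcx) (D2 :: bool fcx) X1 Y1 X2 Y2.
           is_bar D1 X1 Y1 \<and> is_bar D2 X2 Y2 \<and>
           isomorphic (tensor C1 C2) (dsum D1 D2) \<and>
           gr D1 Y1 = gr C1 B1 + gr C2 B2 \<and> flt D1 Y1 = flt C1 B1 + flt C2 B2 \<and>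
           gr D2 X2 = gr C1 T1 + gr C2 T2 \<and> flt D2 X2 = flt C1 T1 + flt C2 T2 \<and>
           ((even_bar D1 X1 Y1 \<and> odd_bar D2 X2 Y2) \<or> (odd_bar D1 X1 Y1 \<and> even_bar D2 X2 Y2))"
proof -
  note b1 = bar_facts[OF assms(1)] and b2 = bar_facts[OF assms(2)]
  let ?C = "tensor C1 C2"
  have bas: "basis ?C = {(T1,T2), (T1,B2), (B1,T2), (B1,B2)}"
    unfolding tensor_def using b1 b2 by auto
  have dtt: "dif ?C (T1,T2) = {(T1,B2), (B1,T2)}"
    unfolding tensor_def symdiff_def using b1 b2 by auto
  have dtb: "dif ?C (T1,B2) = {(B1,B2)}"
    unfolding tensor_def symdiff_def using b1 b2 by auto
  have dbt: "dif ?C (B1,T2) = {(B1,B2)}"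
    unfolding tensor_def symdiff_def using b1 b2 by auto
  have dbb: "dif ?C (B1,B2) = {}"
    unfolding tensor_def symdiff_def using b1 b2 by auto
  have gr: "gr ?C (x, y) = gr C1 x + gr C2 y" "flt ?C (x, y) = flt C1 x + flt C2 y" for x y
    unfolding tensor_def by auto
  have main: "\<exists>(D1 :: bool fcx) (D2 :: bool fcx) X1 Y1 X2 Y2.
           is_bar D1 X1 Y1 \<and> is_bar D2 X2 Y2 \<and>
           isomorphic ?C (dsum D1 D2) \<and>
           gr D1 Y1 = gr ?C (B1,B2) \<and> flt D1 Y1 = flt ?C (B1,B2) \<and>
           gr D2 X2 = gr ?C (T1,T2) \<and> flt D2 X2 = flt ?C (T1,T2) \<and>
           ((even_bar D1 X1 Y1 \<and> odd_bar D2 X2 Y2) \<or> (odd_bar D1 X1 Y1 \<and> even_bar D2 X2 Y2))"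
  proof (cases "flt C1 B1 + flt C2 T2 \<le> flt C1 T1 + flt C2 B2")
    case True
    show ?thesis
      by (rule decomp[where u = "(T1,B2)" and v = "(B1,T2)"])
        (use b1 b2 True in \<open>auto simp: bas dtt dtb dbt dbb gr\<close>)
  next
    case False
    show ?thesis
      by (rule decomp[where u = "(B1,T2)" and v = "(T1,B2)"])
        (use b1 b2 False in \<open>auto simp: bas dtt dtb dbt dbb gr insert_commute\<close>)
  qed
  then show ?thesis unfolding gr .
qed

end
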